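(* Every maximal non-PCG is a $2$-AND-PCG.
   Context: All trees are unrooted with edges weighted by nonnegative reals; $d_T(u,v)$ is the weight of the path between leaves $u,v$ of $T$. A graph $H$ is a PCG if there exist a tree $T$ with leaf set $V(H)$ and an interval $I$ of nonnegative reals such that $\{u,v\}\in E(H)$ iff $d_T(u,v)\in I$. A graph $G$ is a maximal non-PCG if $G$ is not a PCG but adding any single edge (between two non-adjacent vertices of $G$) yields a PCG. A graph $G=(V,E)$ is a $k$-AND-PCG if there exist $k$ PCGs $G_1,\ldots,G_k$ on vertex set $V$ with $E=\bigcap_i E(G_i)$. *)

theory Defs
  imports Complex_Main
begin

definition simple_graph :: "'a set \<Rightarrow> 'a set set \<Rightarrow> bool" where
  "simple_graph V E \<longleftrightarrow> finite V \<and>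
     (\<forall>e\<in>E. \<exists>u v. u \<in> V \<and> v \<in> V \<and> u \<noteq> v \<and> e = {u, v})"

definition tpath :: "'b set set \<Rightarrow> 'b list \<Rightarrow> bool" where
  "tpath TE xs \<longleftrightarrow> xs \<noteq> [] \<and> distinct xs \<and>
     (\<forall>i. Suc i < length xs \<longrightarrow> {xs ! i, xs ! Suc i} \<in> TE)"

definition is_tree :: "'b set \<Rightarrow> 'b set set \<Rightarrow> bool" where
  "is_tree N TE \<longleftrightarrow> simple_graph N TE \<and>
     (\<forall>u\<in>N. \<forall>v\<in>N. \<exists>!xs. tpath TE xs \<and> hd xs = u \<and> last xs = v)"

(* leaves: nodes of degree at most 1 (degree 0 only for the one-node tree) *)
definition tree_leaves :: "'b set \<Rightarrow> 'b set set \<Rightarrow> 'b set" where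
  "tree_leaves N TE = {x \<in> N. card {e \<in> TE. x \<in> e} \<le> 1}"

definition path_weight :: "('b set \<Rightarrow> real) \<Rightarrow> 'b list \<Rightarrow> real" where
  "path_weight w xs = (\<Sum>i < length xs - 1. w {xs ! i, xs ! Suc i})"

definition tree_dist :: "'b set set \<Rightarrow> ('b set \<Rightarrow> real) \<Rightarrow> 'b \<Rightarrow> 'b \<Rightarrow> real" where
  "tree_dist TE w u v = path_weight w (THE xs. tpath TE xs \<and> hd xs = u \<and> last xs = v)"

definition nonneg_interval :: "real set \<Rightarrow> bool" where
  "nonneg_interval I \<longleftrightarrow> I \<subseteq> {0..} \<and>
     (\<forall>x\<in>I. \<forall>z\<in>I. \<forall>y. x \<le> y \<and> y \<le> z \<longrightarrow> y \<in> I)"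

(* Pairwise compatibility graph. Tree nodes are of type 'a + nat: the leaves are
   exactly the (tagged) graph vertices Inl ` V, internal nodes are Inr n. *)
definition pcg :: "'a set \<Rightarrow> 'a set set \<Rightarrow> bool" where
  "pcg V E \<longleftrightarrow> simple_graph V E \<and>
     (\<exists>(N :: ('a + nat) set) TE w I.
        is_tree N TE \<and> (\<forall>e\<in>TE. w e \<ge> 0) \<and> tree_leaves N TE = Inl ` V \<and>
        nonneg_interval I \<and>
        (\<forall>u\<in>V. \<forall>v\<in>V. u \<noteq> v \<longrightarrow>
            ({u, v} \<in> E \<longleftrightarrow> tree_dist TE w (Inl u) (Inl v) \<in> I)))"

definition max_non_pcg :: "'a set \<Rightarrow> 'a set set \<Rightarrow> bool" where
  "max_non_pcg V E \<longleftrightarrow> simple_graph V E \<and> \<not> pcg V E \<and>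
     (\<forall>u\<in>V. \<forall>v\<in>V. u \<noteq> v \<longrightarrow> {u, v} \<notin> E \<longrightarrow> pcg V (insert {u, v} E))"

definition k_and_pcg :: "nat \<Rightarrow> 'a set \<Rightarrow> 'a set set \<Rightarrow> bool" where
  "k_and_pcg k V E \<longleftrightarrow> simple_graph V E \<and>
     (\<exists>Es :: nat \<Rightarrow> 'a set set. (\<forall>i<k. pcg V (Es i)) \<and> E = (\<Inter>i<k. Es i))"

end

theory Submission imports Defs begin

definition starTE :: "'a set \<Rightarrow> ('a + nat) set set" where
  "starTE V = {{Inl x, Inr 0} | x. x \<in> V}"

definition canon :: "('a + nat) \<Rightarrow> ('a + nat) \<Rightarrow> ('a + nat) list" where
  "canon a b = (if a = b then [a] else if a = Inr 0 \<or> b = Inr 0 then [a, b] else [a, Inr 0, b])"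

lemma starTE_edge:
  assumes "{a, b} \<in> starTE V"
  shows "(a = Inr 0 \<and> (\<exists>x\<in>V. b = Inl x)) \<or> (b = Inr 0 \<and> (\<exists>x\<in>V. a = Inl x))"
  using assms unfolding starTE_def by (auto simp: doubleton_eq_iff)

lemma star_len:
  assumes "tpath (starTE V) xs"
  shows "length xs \<le> 3"
proof (rule ccontr)
  assume "\<not> length xs \<le> 3"
  hence L: "length xs \<ge> 4" by simp
  have d: "distinct xs" using assms by (simp add: tpath_def)
  have e0: "{xs!0, xs!Suc 0} \<in> starTE V" using assms L unfolding tpath_def by auto
  have s2: "Suc 2 < length xs" using L by fastforce
  have e2: "{xs!2, xs!Suc 2} \<in> starTE V" using assms s2 unfolding tpath_def by blast
  have "xs!0 = Inr 0 \<or> xs!1 = Inr 0" using starTE_edge[OF e0] by auto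
  moreover have "xs!2 = Inr 0 \<or> xs!3 = Inr 0" using starTE_edge[OF e2] by auto
  moreover have D: "\<And>i j. i < length xs \<Longrightarrow> j < length xs \<Longrightarrow> i \<noteq> j \<Longrightarrow> xs!i \<noteq> xs!j"
    using d by (simp add: distinct_conv_nth)
  moreover have "xs!0 \<noteq> xs!2" using D[of 0 2] L by fastforce
  moreover have "xs!0 \<noteq> xs!3" using D[of 0 3] L by fastforce
  moreover have "xs!1 \<noteq> xs!2" using D[of 1 2] L by fastforce
  moreover have "xs!1 \<noteq> xs!3" using D[of 1 3] L by fastforce
  ultimately show False by (metis One_nat_def)
qed

lemma star_path_canon:
  assumes "tpath (starTE V) xs"
  shows "xs = canon (hd xs) (last xs)"
proof -
  have ne: "xs \<noteq> []" and d: "distinct xs"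
    and ed: "\<And>i. Suc i < length xs \<Longrightarrow> {xs!i, xs!Suc i} \<in> starTE V"
    using assms by (auto simp: tpath_def)
  have "length xs \<ge> 1" using ne by (cases xs) auto
  hence "length xs = 1 \<or> length xs = 2 \<or> length xs = 3" using star_len[OF assms] by linarith
  moreover {
    assume "length xs = 1"
    then obtain a where "xs = [a]" by (auto simp: length_Suc_conv)
    hence ?thesis by (simp add: canon_def)
  }
  moreover {
    assume l: "length xs = 2"
    then obtain a b where xs: "xs = [a, b]" by (auto simp: length_Suc_conv numeral_eq_Suc)
    have "{a, b} \<in> starTE V" using ed[of 0] xs by simp
    from starTE_edge[OF this] have ?thesis using xs d by (auto simp: canon_def)
  }
  moreover {
    assume l: "length xs = 3"
    then obtain a b c where xs: "xs = [a, b, c]" by (auto simp: length_Suc_conv numeral_eq_Suc)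
    have e1: "{a, b} \<in> starTE V" using ed[of 0] xs by simp
    have e2: "{b, c} \<in> starTE V" using ed[of 1] xs by simp
    from starTE_edge[OF e1] starTE_edge[OF e2] have ?thesis using xs d by (auto simp: canon_def)
  }
  ultimately show ?thesis by blast
qed

lemma canon_tpath:
  assumes "a \<in> insert (Inr 0) (Inl ` V)" "b \<in> insert (Inr 0) (Inl ` V)"
  shows "tpath (starTE V) (canon a b)"
  using assms unfolding tpath_def canon_def starTE_def
  by (auto simp: less_Suc_eq nth_Cons' insert_commute)

lemma star_tree:
  assumes "finite V" "u \<in> V" "v \<in> V" "u \<noteq> v"
  shows "is_tree (insert (Inr 0) (Inl ` V)) (starTE V)"
    and "tree_leaves (insert (Inr 0) (Inl ` V)) (starTE V) = Inl ` V"
    and "\<And>x y. x \<in> V \<Longrightarrow> y \<in> V \<Longrightarrow> x \<noteq> y \<Longrightarrow>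
        tree_dist (starTE V) w (Inl x) (Inl y) = w {Inl x, Inr 0} + w {Inr 0, Inl y}"
proof -
  let ?N = "insert (Inr 0) (Inl ` V) :: ('a + nat) set"
  have uniq: "\<exists>!xs. tpath (starTE V) xs \<and> hd xs = a \<and> last xs = b" if "a \<in> ?N" "b \<in> ?N" for a b
  proof
    show "tpath (starTE V) (canon a b) \<and> hd (canon a b) = a \<and> last (canon a b) = b"
      using canon_tpath[OF that] by (simp add: canon_def)
  next
    fix xs assume "tpath (starTE V) xs \<and> hd xs = a \<and> last xs = b"
    thus "xs = canon a b" using star_path_canon by blast
  qed
  have sg: "simple_graph ?N (starTE V)"
    using assms(1) unfolding simple_graph_def starTE_def by auto
  show "is_tree ?N (starTE V)" unfolding is_tree_def using sg uniq by blast
  have c1: "card {e \<in> starTE V. Inl x \<in> e} \<le> 1" if "x \<in> V" for x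
  proof -
    have "{e \<in> starTE V. Inl x \<in> e} = {{Inl x, Inr 0}}" using that unfolding starTE_def by auto
    thus ?thesis by simp
  qed
  have c2: "\<not> card {e \<in> starTE V. Inr 0 \<in> e} \<le> 1"
  proof -
    have "{{Inl u, Inr 0}, {Inl v, Inr 0}} \<subseteq> {e \<in> starTE V. Inr 0 \<in> e}"
      using assms unfolding starTE_def by auto
    moreover have "finite (starTE V)" using assms(1) unfolding starTE_def by simp
    ultimately have "card {{Inl u, Inr 0 :: 'a + nat}, {Inl v, Inr 0}} \<le> card {e \<in> starTE V. Inr 0 \<in> e}"
      by (intro card_mono) auto
    moreover have "card {{Inl u, Inr 0 :: 'a + nat}, {Inl v, Inr 0}} = 2"
      using assms(4) by (simp add: doubleton_eq_iff)
    ultimately show ?thesis by simp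
  qed
  show "tree_leaves ?N (starTE V) = Inl ` V"
    unfolding tree_leaves_def using c1 c2 by auto
  fix x y assume xy: "x \<in> V" "y \<in> V" "x \<noteq> y"
  have "(THE xs. tpath (starTE V) xs \<and> hd xs = Inl x \<and> last xs = Inl y) = canon (Inl x) (Inl y)"
  proof (rule the1_equality)
    show "\<exists>!xs. tpath (starTE V) xs \<and> hd xs = Inl x \<and> last xs = Inl y" using uniq xy by auto
    show "tpath (starTE V) (canon (Inl x) (Inl y)) \<and> hd (canon (Inl x) (Inl y)) = Inl x \<and> last (canon (Inl x) (Inl y)) = Inl y"
      using canon_tpath[of "Inl x" V "Inl y"] xy by (simp add: canon_def)
  qed
  thus "tree_dist (starTE V) w (Inl x) (Inl y) = w {Inl x, Inr 0} + w {Inr 0, Inl y}"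
    using xy by (simp add: tree_dist_def canon_def path_weight_def numeral_eq_Suc)
qed

lemma pcg_star:
  assumes "simple_graph V E" "u \<in> V" "v \<in> V" "u \<noteq> v" "nonneg_interval I"
    and "\<forall>x\<in>V. \<forall>y\<in>V. x \<noteq> y \<longrightarrow> ({x, y} \<in> E \<longleftrightarrow>
           (if x = u \<or> x = v then 1 else 0) + (if y = u \<or> y = v then 1 else 0) \<in> I)"
  shows "pcg V E"
proof -
  have fin: "finite V" using assms(1) by (simp add: simple_graph_def)
  define w :: "('a + nat) set \<Rightarrow> real" where "w e = (if Inl u \<in> e \<or> Inl v \<in> e then 1 else 0)" for e
  note st = star_tree[OF fin assms(2-4)]
  have "\<forall>x\<in>V. \<forall>y\<in>V. x \<noteq> y \<longrightarrow>
            ({x, y} \<in> E \<longleftrightarrow> tree_dist (starTE V) w (Inl x) (Inl y) \<in> I)"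
  proof (intro ballI impI)
    fix x y assume xy: "x \<in> V" "y \<in> V" "x \<noteq> y"
    have "tree_dist (starTE V) w (Inl x) (Inl y) =
        (if x = u \<or> x = v then 1 else 0) + (if y = u \<or> y = v then 1 else 0)"
      using st(3)[OF xy] by (simp add: w_def)
    thus "({x, y} \<in> E \<longleftrightarrow> tree_dist (starTE V) w (Inl x) (Inl y) \<in> I)"
      using assms(6) xy by simp
  qed
  moreover have "\<forall>e\<in>starTE V. w e \<ge> 0" by (simp add: w_def)
  ultimately show ?thesis unfolding pcg_def using assms(1,5) st(1,2) by blast
qed

lemma tpath_empty: "tpath {} xs \<Longrightarrow> xs = [hd xs]"
  unfolding tpath_def by (cases xs; cases "tl xs") auto

lemma pcg_small:
  assumes "simple_graph V E" "\<forall>x\<in>V. \<forall>y\<in>V. x = y"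
  shows "pcg V E"
proof -
  have fin: "finite V" using assms(1) by (simp add: simple_graph_def)
  have tr: "is_tree (Inl ` V :: ('a + nat) set) {}"
    unfolding is_tree_def simple_graph_def
  proof (intro conjI ballI)
    show "finite (Inl ` V :: ('a + nat) set)" using fin by simp
    fix a b :: "'a + nat" assume ab: "a \<in> (Inl ` V :: ('a + nat) set)" "b \<in> Inl ` V"
    hence "a = b" using assms(2) by auto
    show "\<exists>!xs. tpath {} xs \<and> hd xs = a \<and> last xs = b"
    proof
      show "tpath {} [a] \<and> hd [a] = a \<and> last [a] = b" using \<open>a = b\<close> by (simp add: tpath_def)
    next
      fix xs assume "tpath {} xs \<and> hd xs = a \<and> last xs = b"
      thus "xs = [a]" using tpath_empty by metis
    qed
  qed simp
  have "tree_leaves (Inl ` V :: ('a + nat) set) {} = Inl ` V" by (simp add: tree_leaves_def)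
  moreover have "nonneg_interval {}" by (simp add: nonneg_interval_def)
  ultimately show ?thesis unfolding pcg_def using assms tr
    by (intro conjI exI[of _ "Inl ` V"] exI[of _ "{}"] exI[of _ "\<lambda>_. 0"] exI[of _ "{}"]) auto
qed

theorem theorem11:
  fixes V :: "'a set" and E :: "'a set set"
  assumes "max_non_pcg V E"
  shows "k_and_pcg 2 V E"
proof -
  have sg: "simple_graph V E" and np: "\<not> pcg V E"
    and mx: "\<And>u v. u \<in> V \<Longrightarrow> v \<in> V \<Longrightarrow> u \<noteq> v \<Longrightarrow> {u, v} \<notin> E \<Longrightarrow> pcg V (insert {u, v} E)"
    using assms by (auto simp: max_non_pcg_def)
  define Kc where "Kc = {{x, y} | x y. x \<in> V \<and> y \<in> V \<and> x \<noteq> y}"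
  have EK: "E \<subseteq> Kc" using sg unfolding simple_graph_def Kc_def by blast
  show ?thesis
  proof (cases "\<exists>u\<in>V. \<exists>v\<in>V. u \<noteq> v \<and> {u, v} \<notin> E")
    case True
    then obtain u v where uv: "u \<in> V" "v \<in> V" "u \<noteq> v" "{u, v} \<notin> E" by blast
    have p1: "pcg V (insert {u, v} E)" using mx uv by blast
    have sg2: "simple_graph V (Kc - {{u, v}})"
      using sg unfolding simple_graph_def Kc_def by blast
    have p2: "pcg V (Kc - {{u, v}})"
    proof (rule pcg_star[OF sg2 uv(1-3), of "{0..1}"])
      show "nonneg_interval {0..1}" by (auto simp: nonneg_interval_def)
      show "\<forall>x\<in>V. \<forall>y\<in>V. x \<noteq> y \<longrightarrow> ({x, y} \<in> Kc - {{u, v}} \<longleftrightarrow>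
           (if x = u \<or> x = v then 1 else 0) + (if y = u \<or> y = v then 1 else 0) \<in> {0..(1::real)})"
        using uv unfolding Kc_def by (auto simp: doubleton_eq_iff)
    qed
    have "E = insert {u, v} E \<inter> (Kc - {{u, v}})" using EK uv(4) by blast
    moreover have "(\<Inter>i<(2::nat). (\<lambda>i. if i = 0 then insert {u, v} E else Kc - {{u, v}}) i)
        = insert {u, v} E \<inter> (Kc - {{u, v}})"
      by (auto simp: lessThan_nat_numeral)
    ultimately show ?thesis unfolding k_and_pcg_def using sg p1 p2
      by (intro conjI exI[of _ "\<lambda>i. if i = 0 then insert {u, v} E else Kc - {{u, v}}"]) auto
  next
    case False
    have "pcg V E"
    proof (cases "\<exists>u\<in>V. \<exists>v\<in>V. u \<noteq> v")
      case True
      then obtain u v where uv: "u \<in> V" "v \<in> V" "u \<noteq> v" by blast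
      show ?thesis
      proof (rule pcg_star[OF sg uv, of "{0..}"])
        show "nonneg_interval {0..}" by (auto simp: nonneg_interval_def)
        show "\<forall>x\<in>V. \<forall>y\<in>V. x \<noteq> y \<longrightarrow> ({x, y} \<in> E \<longleftrightarrow>
           (if x = u \<or> x = v then 1 else 0) + (if y = u \<or> y = v then 1 else 0) \<in> {0::real..})"
          using False by auto
      qed
    next
      case False
      thus ?thesis using pcg_small[OF sg] by blast
    qed
    thus ?thesis using np by blast
  qed
qed

end
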